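(* Let $U$ be a finite nonempty set, $R$ an equivalence relation on $U$, and $M(R)$ the support matroid induced by $R$. For every $X\subseteq U$, $X$ is a closed set of $M(R)$ if and only if $R^{*}(X)=R_{*}(X)$.
   Context: For $x\in U$, $RN(x)=\{y\in U\mid xRy\}$; $R_{*}(X)=\{x\in U\mid RN(x)\subseteq X\}$ and $R^{*}(X)=\{x\in U\mid RN(x)\cap X\neq\emptyset\}$. Let $\mathbf{S}(R)=\{X\subseteq U\mid R^{*}(X)=U\}$. The support matroid $M(R)=(U,\mathbf{I}(R))$ is the matroid on $U$ whose independent sets $\mathbf{I}(R)$ are the subsets of inclusion-minimal members of $\mathbf{S}(R)$. For a matroid $(U,\mathbf{I})$, the rank is $r(X)=\max\{|I|\mid I\subseteq X, I\in\mathbf{I}\}$, the closure is $cl(X)=\{e\in U\mid r(X)=r(X\cup\{e\})\}$, and $X$ is closed if $cl(X)=X$. *)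

theory Defs
  imports Main
begin

definition RN :: "'a set \<Rightarrow> ('a \<times> 'a) set \<Rightarrow> 'a \<Rightarrow> 'a set" where
  "RN U R x = {y \<in> U. (x, y) \<in> R}"

definition lower_appr :: "'a set \<Rightarrow> ('a \<times> 'a) set \<Rightarrow> 'a set \<Rightarrow> 'a set" where
  "lower_appr U R X = {x \<in> U. RN U R x \<subseteq> X}"

definition upper_appr :: "'a set \<Rightarrow> ('a \<times> 'a) set \<Rightarrow> 'a set \<Rightarrow> 'a set" where
  "upper_appr U R X = {x \<in> U. RN U R x \<inter> X \<noteq> {}}"

definition support_sets :: "'a set \<Rightarrow> ('a \<times> 'a) set \<Rightarrow> 'a set set" where
  "support_sets U R = {X. X \<subseteq> U \<and> upper_appr U R X = U}"

definition minimal_support_sets :: "'a set \<Rightarrow> ('a \<times> 'a) set \<Rightarrow> 'a set set" where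
  "minimal_support_sets U R =
     {B \<in> support_sets U R. \<forall>C \<in> support_sets U R. C \<subseteq> B \<longrightarrow> C = B}"

definition support_indep :: "'a set \<Rightarrow> ('a \<times> 'a) set \<Rightarrow> 'a set set" where
  "support_indep U R = {I. \<exists>B \<in> minimal_support_sets U R. I \<subseteq> B}"

definition support_rank :: "'a set \<Rightarrow> ('a \<times> 'a) set \<Rightarrow> 'a set \<Rightarrow> nat" where
  "support_rank U R X = Max {card I | I. I \<subseteq> X \<and> I \<in> support_indep U R}"

definition support_cl :: "'a set \<Rightarrow> ('a \<times> 'a) set \<Rightarrow> 'a set \<Rightarrow> 'a set" where
  "support_cl U R X = {e \<in> U. support_rank U R X = support_rank U R (insert e X)}"

definition support_closed :: "'a set \<Rightarrow> ('a \<times> 'a) set \<Rightarrow> 'a set \<Rightarrow> bool" where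
  "support_closed U R X \<longleftrightarrow> support_cl U R X = X"

end

theory Submission
  imports Defs
begin

context
  fixes U :: "'a set" and R :: "('a \<times> 'a) set"
  assumes fin: "finite U" and eq: "equiv U R"
begin

abbreviation q where "q x \<equiv> R `` {x}"

lemma RN_eq: "RN U R x = q x"
  using eq unfolding RN_def equiv_def refl_on_def by auto

lemma q_eq_iff: "x \<in> U \<Longrightarrow> y \<in> U \<Longrightarrow> q x = q y \<longleftrightarrow> (x, y) \<in> R"
  using eq by (meson eq_equiv_class_iff2 equiv_class_eq_iff)

lemma q_self: "x \<in> U \<Longrightarrow> x \<in> q x"
  using eq unfolding equiv_def refl_on_def by auto

lemma mem_q: "y \<in> q x \<longleftrightarrow> (x, y) \<in> R" by simp

lemma upper_iff: "x \<in> upper_appr U R X \<longleftrightarrow> x \<in> U \<and> (\<exists>y\<in>X. y \<in> U \<and> q y = q x)"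
proof -
  have R: "R \<subseteq> U \<times> U" using eq unfolding equiv_def refl_on_def by auto
  show ?thesis unfolding upper_appr_def RN_eq
  proof (auto, goal_cases)
    case (1 y) then show ?case using R q_eq_iff[of x y] eq
      by (auto intro!: bexI[of _ y] dest: equiv_class_eq_iff[THEN iffD2])
  next
    case (2 y) then show ?case using q_self[of y] by auto
  qed
qed

lemma support_iff: "B \<in> support_sets U R \<longleftrightarrow> B \<subseteq> U \<and> (\<forall>x\<in>U. \<exists>y\<in>B. q y = q x)"
  unfolding support_sets_def using upper_iff[of _ B] unfolding upper_appr_def by blast

lemma minimal_inj: assumes "B \<in> minimal_support_sets U R" shows "inj_on q B"
proof (rule inj_onI, rule ccontr)
  fix x y assume xy: "x \<in> B" "y \<in> B" "q x = q y" "x \<noteq> y"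
  have B: "B \<in> support_sets U R" and mn: "\<And>C. C \<in> support_sets U R \<Longrightarrow> C \<subseteq> B \<Longrightarrow> C = B"
    using assms unfolding minimal_support_sets_def by auto
  have "B - {y} \<in> support_sets U R"
    unfolding support_iff using B[unfolded support_iff] xy by (metis Diff_iff Diff_subset singletonD subset_trans)
  then have "B - {y} = B" using mn by blast
  with xy show False by blast
qed

lemma support_inj_minimal: assumes "B \<in> support_sets U R" "inj_on q B"
  shows "B \<in> minimal_support_sets U R"
  unfolding minimal_support_sets_def
proof (safe intro!: assms(1))
  fix C x assume C: "C \<in> support_sets U R" "C \<subseteq> B" and x: "x \<in> B"
  have "x \<in> U" using assms x unfolding support_iff by auto
  then obtain z where z: "z \<in> C" "q z = q x" using C unfolding support_iff by auto
  then have "z = x" using assms(2) x C(2) by (auto dest: inj_onD)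
  then show "x \<in> C" using z by simp
qed

lemma indep_iff: "I \<in> support_indep U R \<longleftrightarrow> I \<subseteq> U \<and> inj_on q I"
proof
  assume "I \<in> support_indep U R"
  then obtain B where B: "B \<in> minimal_support_sets U R" "I \<subseteq> B" unfolding support_indep_def by auto
  then show "I \<subseteq> U \<and> inj_on q I" using minimal_inj[OF B(1)] inj_on_subset
    unfolding minimal_support_sets_def support_iff by blast
next
  assume A: "I \<subseteq> U \<and> inj_on q I"
  define f where "f x = (SOME y. y \<in> q x)" for x
  have fq: "x \<in> U \<Longrightarrow> f x \<in> q x" for x unfolding f_def using q_self by (metis someI_ex)
  have fU: "x \<in> U \<Longrightarrow> f x \<in> U \<and> q (f x) = q x" for x
    using fq[of x] eq by (metis Image_singleton_iff equiv_class_eq_iff)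
  define B where "B = I \<union> f ` {x \<in> U. q x \<inter> I = {}}"
  have BU: "B \<subseteq> U" using A fU unfolding B_def by auto
  have sup: "B \<in> support_sets U R" unfolding support_iff
  proof (safe intro!: BU)
    fix x assume x: "x \<in> U"
    show "\<exists>y\<in>B. q y = q x"
    proof (cases "q x \<inter> I = {}")
      case True then show ?thesis using fU[OF x] x unfolding B_def by blast
    next
      case False
      then obtain i where i: "i \<in> I" "i \<in> q x" by auto
      then have "q i = q x" using eq by (metis Image_singleton_iff equiv_class_eq_iff)
      then show ?thesis using i unfolding B_def by blast
    qed
  qed
  have inj: "inj_on q B"
  proof (rule inj_onI)
    fix a b assume ab: "a \<in> B" "b \<in> B" "q a = q b"
    have aU: "a \<in> U" "b \<in> U" using ab BU by auto
    have cross: False if "i \<in> I" "x \<in> U" "q x \<inter> I = {}" "q i = q (f x)" for i x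
      using that fU[of x] q_self[of i] A by auto
    show "a = b"
    proof (cases "a \<in> I")
      case True
      show ?thesis
      proof (cases "b \<in> I")
        case True with \<open>a \<in> I\<close> ab A show ?thesis by (auto dest: inj_onD)
      next
        case False then obtain y where "y \<in> U" "q y \<inter> I = {}" "b = f y" using ab unfolding B_def by auto
        then show ?thesis using cross[of a y] True ab by auto
      qed
    next
      case False then obtain x where x: "x \<in> U" "q x \<inter> I = {}" "a = f x" using ab unfolding B_def by auto
      show ?thesis
      proof (cases "b \<in> I")
        case True then show ?thesis using cross[of b x] x ab by auto
      next
        case False then obtain y where y: "y \<in> U" "q y \<inter> I = {}" "b = f y" using ab unfolding B_def by auto
        then have "q x = q y" using x ab fU by auto
        then show ?thesis using x y unfolding f_def by simp
      qed
    qed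
  qed
  show "I \<in> support_indep U R" unfolding support_indep_def
    using support_inj_minimal[OF sup inj] unfolding B_def by blast
qed

lemma rank_eq: assumes Y: "Y \<subseteq> U" shows "support_rank U R Y = card (q ` Y)"
proof -
  have fY: "finite Y" using Y fin finite_subset by auto
  let ?S = "{card I | I. I \<subseteq> Y \<and> I \<in> support_indep U R}"
  have le: "n \<le> card (q ` Y)" if nS: "n \<in> ?S" for n
  proof -
    obtain I where I: "n = card I" "I \<subseteq> Y" "I \<in> support_indep U R" using nS by blast
    then have I3: "inj_on q I" using indep_iff by blast
    then have "card I = card (q ` I)" by (simp add: card_image)
    also have "\<dots> \<le> card (q ` Y)" using I(2) fY by (intro card_mono) auto
    finally show ?thesis using I(1) by simp
  qed
  define h where "h c = (SOME y. y \<in> Y \<and> q y = c)" for c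
  have h: "h c \<in> Y \<and> q (h c) = c" if c: "c \<in> q ` Y" for c
  proof -
    from c obtain y where "y \<in> Y \<and> q y = c" by blast
    then show ?thesis unfolding h_def by (rule someI)
  qed
  define I where "I = h ` (q ` Y)"
  have IY: "I \<subseteq> Y" unfolding I_def using h by blast
  have inj: "inj_on q I"
  proof (rule inj_onI)
    fix a b assume "a \<in> I" "b \<in> I" "q a = q b"
    then obtain c d where "c \<in> q ` Y" "d \<in> q ` Y" "a = h c" "b = h d" "q a = q b"
      unfolding I_def by blast
    then show "a = b" using h[of c] h[of d] by simp
  qed
  have injh: "inj_on h (q ` Y)"
  proof (rule inj_onI)
    fix c d assume "c \<in> q ` Y" "d \<in> q ` Y" "h c = h d"
    then show "c = d" using h[of c] h[of d] by metis
  qed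
  have cI: "card I = card (q ` Y)" unfolding I_def using card_image[OF injh] .
  have II: "I \<in> support_indep U R" using IY inj Y indep_iff by blast
  have mem: "card (q ` Y) \<in> ?S" unfolding mem_Collect_eq
    by (rule exI[of _ I]) (use IY II cI in simp)
  have fS: "finite ?S" by (rule finite_subset[of _ "{..card (q ` Y)}"]) (use le in blast, simp)
  show ?thesis unfolding support_rank_def
    by (rule Max_eqI[OF fS le mem])
qed

lemma cl_eq: assumes "X \<subseteq> U" shows "support_cl U R X = upper_appr U R X"
proof -
  have fX: "finite (q ` X)" using assms fin finite_subset by blast
  show ?thesis
  proof (rule set_eqI)
    fix e
    show "e \<in> support_cl U R X \<longleftrightarrow> e \<in> upper_appr U R X"
    proof (cases "e \<in> U")
      case True
      have "support_rank U R (insert e X) = card (insert (q e) (q ` X))"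
        using rank_eq[of "insert e X"] True assms by simp
      moreover have "support_rank U R X = card (q ` X)" using rank_eq assms by simp
      ultimately have "e \<in> support_cl U R X \<longleftrightarrow> q e \<in> q ` X"
        unfolding support_cl_def using True fX by (auto simp: card_insert_if)
      also have "\<dots> \<longleftrightarrow> e \<in> upper_appr U R X" using upper_iff[of e X] True assms by auto
      finally show ?thesis .
    next
      case False then show ?thesis unfolding support_cl_def upper_appr_def by auto
    qed
  qed
qed

end

theorem corollary3:
  fixes U :: "'a set" and R :: "('a \<times> 'a) set" and X :: "'a set"
  assumes "finite U" and "U \<noteq> {}" and "equiv U R" and "X \<subseteq> U"
  shows "support_closed U R X \<longleftrightarrow> upper_appr U R X = lower_appr U R X"
proof -
  have cl: "support_closed U R X \<longleftrightarrow> upper_appr U R X = X"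
    unfolding support_closed_def using cl_eq[OF assms(1,3,4)] by simp
  have self: "x \<in> U \<Longrightarrow> x \<in> RN U R x" for x
    using assms(3) unfolding RN_def equiv_def refl_on_def by auto
  have low: "lower_appr U R X \<subseteq> X" using self unfolding lower_appr_def by auto
  have up: "X \<subseteq> upper_appr U R X" using self assms(4) unfolding upper_appr_def by auto
  have "upper_appr U R X = X \<Longrightarrow> lower_appr U R X = X"
  proof -
    assume u: "upper_appr U R X = X"
    have "X \<subseteq> lower_appr U R X"
    proof
      fix x assume x: "x \<in> X"
      have "RN U R x \<subseteq> X"
      proof
        fix y assume y: "y \<in> RN U R x"
        then have "y \<in> U" "(y, x) \<in> R" using assms(3) unfolding RN_def equiv_def sym_def by auto
        then have "y \<in> upper_appr U R X" using x assms(4) assms(3)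
          unfolding upper_appr_def RN_def by auto
        then show "y \<in> X" using u by simp
      qed
      then show "x \<in> lower_appr U R X" using x assms(4) unfolding lower_appr_def by auto
    qed
    then show ?thesis using low by auto
  qed
  then show ?thesis using cl low up by auto
qed

end
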